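(* Let $(X,m)$ be a $\sigma$-finite measure space, $1\le p<\infty$, $\gamma\ne0$, and $\{T_t:t>0\}$ a one-parameter family of (not necessarily linear) operators on $L^p(X,m)$; let $f\in L^p(X,m)$ with $(x,t)\mapsto T_tf(x)$ measurable. Put $L=\infty$ if $\gamma>0$ and $L=0$ if $\gamma<0$, and for $\lambda>0$ $$J(\lambda)=\lambda^p\iint_{\{(x,t)\in X\times(0,\infty):\,t^{-\gamma/p}|T_tf(x)|>\lambda\}}t^{\gamma-1}\,dt\,dm(x).$$ (i) If $T^*f:=\sup_{t>0}|T_tf|\in L^p(X,m)$, then $\sup_{\lambda>0}J(\lambda)\le\frac1{|\gamma|}\|T^*f\|_{L^p(X,m)}^p$. If, in addition, $g(x)=\lim_{t\to0+}T_tf(x)$ exists and is finite for $m$-a.e. $x$, then $\lim_{\lambda\to L}J(\lambda)$ exists and equals $\frac1{|\gamma|}\|g\|_{L^p(X,m)}^p$. (ii) If $g(x)=\lim_{t\to0+}T_tf(x)$ exists and is finite for $m$-a.e. $x$, then $\frac1{|\gamma|}\|g\|_{L^p(X,m)}^p\le\liminf_{\lambda\to L}J(\lambda)$. *)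

theory Defs
  imports "HOL-Analysis.Analysis"
begin

definition Lp :: "'a measure \<Rightarrow> real \<Rightarrow> ('a \<Rightarrow> complex) set" where
  "Lp M p = {h. h \<in> borel_measurable M \<and> integrable M (\<lambda>x. norm (h x) powr p)}"

definition Jfun :: "'a measure \<Rightarrow> real \<Rightarrow> real \<Rightarrow> (real \<Rightarrow> 'a \<Rightarrow> complex) \<Rightarrow> real \<Rightarrow> ennreal" where
  "Jfun M p \<gamma> F lam = ennreal (lam powr p) *
     (\<integral>\<^sup>+ x. (\<integral>\<^sup>+ t \<in> {t. 0 < t \<and> t powr (- \<gamma> / p) * norm (F t x) > lam}.
          ennreal (t powr (\<gamma> - 1)) \<partial>lborel) \<partial>M)"

definition maxfun :: "(real \<Rightarrow> 'a \<Rightarrow> complex) \<Rightarrow> 'a \<Rightarrow> ennreal" where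
  "maxfun F x = (SUP t\<in>{0<..}. ennreal (norm (F t x)))"

end

theory Submission
  imports Defs "HOL-Analysis.Analysis"
begin
lemma filterlim_F_pos0:
  assumes "F = at_top \<or> F = at_right (0::real)" "filterlim X F sequentially"
  shows "eventually (\<lambda>n. 0 < X n) sequentially"
proof -
  have "eventually (\<lambda>x. 0 < x) F" using assms(1)
    by (auto simp: eventually_gt_at_top eventually_at_right_less)
  then show ?thesis using assms(2) by (auto simp: filterlim_iff)
qed

lemma seq_tendsto_F:
  fixes h :: "real \<Rightarrow> 'b::first_countable_topology"
  assumes F: "F = at_top \<or> F = at_right (0::real)"
    and H: "\<And>X. filterlim X F sequentially \<Longrightarrow> (\<And>n. 0 < X n) \<Longrightarrow> (\<lambda>n. h (X n)) \<longlonglongrightarrow> y"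
  shows "(h \<longlongrightarrow> y) F"
proof -
  have H': "(\<lambda>n. h (X n)) \<longlonglongrightarrow> y" if X: "filterlim X F sequentially" for X
  proof -
    define X' where "X' n = (if 0 < X n then X n else 1)" for n
    have ev: "eventually (\<lambda>n. X' n = X n) sequentially"
      using filterlim_F_pos0[OF F X] by eventually_elim (simp add: X'_def)
    have "filterlim X' F sequentially" using X by (subst filterlim_cong[OF refl refl ev])
    then have "(\<lambda>n. h (X' n)) \<longlonglongrightarrow> y" by (rule H) (simp add: X'_def)
    moreover have "eventually (\<lambda>n. h (X' n) = h (X n)) sequentially" using ev by eventually_elim simp
    ultimately show ?thesis by (rule Lim_transform_eventually)
  qed
  show ?thesis using F
  proof
    assume "F = at_top" then show ?thesis using H' by (auto intro: tendsto_at_topI_sequentially)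
  next
    assume F0: "F = at_right 0"
    show ?thesis unfolding F0
    proof (rule tendsto_at_right_sequentially[of 0 1])
      fix S :: "nat \<Rightarrow> real" assume "\<And>n. 0 < S n" "S \<longlonglongrightarrow> 0"
      then have "filterlim S (at_right 0) sequentially"
        by (intro tendsto_imp_filterlim_at_right) (auto)
      then show "(\<lambda>n. h (S n)) \<longlonglongrightarrow> y" using H' F0 by auto
    qed simp
  qed
qed

lemma seq_Liminf_F:
  fixes h :: "real \<Rightarrow> ennreal"
  assumes F: "F = at_top \<or> F = at_right (0::real)"
    and H: "\<And>X. filterlim X F sequentially \<Longrightarrow> (\<And>n. 0 < X n) \<Longrightarrow> y \<le> liminf (\<lambda>n. h (X n))"
  shows "y \<le> Liminf F h"
proof (subst le_Liminf_iff, intro allI impI)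
  fix z assume z: "z < y"
  define q where "q x = (if z < h x then 0 else 1::real)" for x
  have "(q \<longlongrightarrow> 0) F"
  proof (rule seq_tendsto_F[OF F])
    fix X assume X: "filterlim X F sequentially" "\<And>n. 0 < X n"
    have "eventually (\<lambda>n. z < h (X n)) sequentially"
      using H[OF X] z by (simp add: le_Liminf_iff)
    then have "eventually (\<lambda>n. q (X n) = 0) sequentially"
      by eventually_elim (simp add: q_def)
    then show "(\<lambda>n. q (X n)) \<longlonglongrightarrow> 0"
      by (rule tendsto_eventually)
  qed
  then have "eventually (\<lambda>x. q x < 1/2) F"
    by (rule order_tendstoD) simp
  then show "eventually (\<lambda>x. z < h x) F"
    by eventually_elim (auto simp: q_def split: if_splits)
qed



lemma set_char:
  fixes a lam p \<gamma> t :: real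
  assumes a: "0 < a" and lam: "0 < lam" and p: "0 < p" and g: "\<gamma> \<noteq> 0" and t: "0 < t"
  defines "b \<equiv> (a/lam) powr (p/\<gamma>)"
  shows "t powr (-\<gamma>/p) * a > lam \<longleftrightarrow> (if \<gamma> > 0 then t < b else b < t)"
proof -
  have "t powr (-\<gamma>/p) * a > lam \<longleftrightarrow> t powr (-\<gamma>/p) > lam / a"
    using a by (simp add: field_simps)
  also have "\<dots> \<longleftrightarrow> ln (t powr (-\<gamma>/p)) > ln (lam / a)"
    using a lam t by (intro ln_less_cancel_iff[symmetric]) auto
  also have "\<dots> \<longleftrightarrow> (-\<gamma>/p) * ln t > ln (lam/a)"
    using t by (simp add: ln_powr)
  also have "ln (lam/a) = - ln (a/lam)" using a lam by (simp add: ln_div)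
  finally have 0: "t powr (-\<gamma>/p) * a > lam \<longleftrightarrow> (-\<gamma>/p) * ln t > - ln (a/lam)" .
  have lb: "ln b = (p/\<gamma>) * ln (a/lam)" unfolding b_def using a lam by (simp add: ln_powr)
  have 1: "t powr (-\<gamma>/p) * a > lam \<longleftrightarrow> (-\<gamma>/p) * ln t > - ((\<gamma>/p) * ln b)"
    unfolding 0 lb using g p by (simp add: field_simps)
  have bpos: "0 < b" unfolding b_def using a lam by simp
  show ?thesis
  proof (cases "\<gamma> > 0")
    case True
    then have "(-\<gamma>/p) * ln t > - ((\<gamma>/p) * ln b) \<longleftrightarrow> ln t < ln b"
      using p by (simp add: field_simps)
    also have "\<dots> \<longleftrightarrow> t < b" using t bpos by simp
    finally show ?thesis using 1 True by simp
  next
    case False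
    then have gn: "\<gamma> < 0" using g by simp
    then have "(-\<gamma>/p) * ln t > - ((\<gamma>/p) * ln b) \<longleftrightarrow> ln b < ln t"
      using p by (simp add: field_simps)
    also have "\<dots> \<longleftrightarrow> b < t" using t bpos by simp
    finally show ?thesis using 1 False by simp
  qed
qed


lemma int_0_b:
  fixes b \<gamma> :: real assumes "0 < b" "0 < \<gamma>"
  shows "(\<integral>\<^sup>+t\<in>{0<..<b}. ennreal (t powr (\<gamma>-1)) \<partial>lborel) = ennreal (b powr \<gamma> / \<gamma>)"
proof -
  have "(\<integral>\<^sup>+t\<in>{0<..<b}. ennreal (t powr (\<gamma>-1)) \<partial>lborel) = (\<integral>\<^sup>+t. ennreal (t powr (\<gamma>-1)) * indicator {0..b} t \<partial>lborel)"
    apply (rule nn_integral_cong_AE)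
    using AE_lborel_singleton[of 0] AE_lborel_singleton[of b]
    by eventually_elim (auto simp: indicator_def)
  also have "\<dots> = ennreal (b powr (\<gamma> - 1 + 1) / (\<gamma> - 1 + 1))"
    using assms by (intro nn_integral_has_integral_lebesgue' has_integral_powr_from_0) auto
  finally show ?thesis by simp
qed

lemma int_b_inf:
  fixes b \<gamma> :: real assumes "0 < b" "\<gamma> < 0"
  shows "(\<integral>\<^sup>+t\<in>{b<..}. ennreal (t powr (\<gamma>-1)) \<partial>lborel) = ennreal (b powr \<gamma> / \<bar>\<gamma>\<bar>)"
proof -
  have "(\<integral>\<^sup>+t\<in>{b<..}. ennreal (t powr (\<gamma>-1)) \<partial>lborel) = (\<integral>\<^sup>+t. ennreal (t powr (\<gamma>-1)) * indicator {b..} t \<partial>lborel)"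
    apply (rule nn_integral_cong_AE)
    using AE_lborel_singleton[of b]
    by eventually_elim (auto simp: indicator_def)
  also have "\<dots> = ennreal (-(b powr (\<gamma> - 1 + 1)) / (\<gamma> - 1 + 1))"
    using assms by (intro nn_integral_has_integral_lebesgue' has_integral_powr_to_inf) auto
  finally show ?thesis using assms by simp
qed

lemma ideal_integral:
  fixes a lam p \<gamma> :: real
  assumes a: "0 \<le> a" and lam: "0 < lam" and p: "0 < p" and g: "\<gamma> \<noteq> 0"
  shows "ennreal (lam powr p) * (\<integral>\<^sup>+t\<in>{t. 0<t \<and> t powr (-\<gamma>/p) * a > lam}. ennreal (t powr (\<gamma>-1)) \<partial>lborel)
     = ennreal (a powr p / \<bar>\<gamma>\<bar>)"
proof (cases "a = 0")
  case True
  have E: "{t. 0<t \<and> t powr (-\<gamma>/p) * a > lam} = {}" using lam True by auto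
  show ?thesis by (subst E) (simp add: True p)
next
  case False
  then have a: "0 < a" using a by simp
  define b where "b = (a/lam) powr (p/\<gamma>)"
  have bpos: "0 < b" unfolding b_def using a lam by simp
  have bg: "b powr \<gamma> = a powr p / lam powr p"
    unfolding b_def using a lam g by (simp add: powr_powr powr_divide)
  have sc: "\<And>t. 0<t \<Longrightarrow> (t powr (-\<gamma>/p) * a > lam) \<longleftrightarrow> (if \<gamma>>0 then t<b else b<t)"
    using set_char[OF a lam p g] unfolding b_def by blast
  have key: "lam powr p * (b powr \<gamma> / \<bar>\<gamma>\<bar>) = a powr p / \<bar>\<gamma>\<bar>"
    unfolding bg using lam by simp
  show ?thesis
  proof (cases "\<gamma> > 0")
    case True
    have "{t. 0<t \<and> t powr (-\<gamma>/p) * a > lam} = {0<..<b}"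
      using sc True by auto
    then show ?thesis using int_0_b[OF bpos True] key True
      by (simp add: ennreal_mult[symmetric])
  next
    case False
    then have gn: "\<gamma> < 0" using g by simp
    have "{t. 0<t \<and> t powr (-\<gamma>/p) * a > lam} = {b<..}"
      using sc False bpos by (auto intro: less_trans)
    then show ?thesis using int_b_inf[OF bpos gn] key
      by (simp add: ennreal_mult[symmetric])
  qed
qed



lemma rescale:
  fixes \<phi> :: "real \<Rightarrow> complex" and p \<gamma> lam :: real
  assumes \<phi>m[measurable]: "\<phi> \<in> borel_measurable borel" and p: "0 < p" and gam: "\<gamma> \<noteq> 0" and lam: "0 < lam"
  defines "s \<equiv> lam powr (-p/\<gamma>)"
  shows "ennreal (lam powr p) * (\<integral>\<^sup>+t\<in>{t. 0<t \<and> t powr (-\<gamma>/p) * norm (\<phi> t) > lam}. ennreal (t powr (\<gamma>-1)) \<partial>lborel)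
    = (\<integral>\<^sup>+u. ennreal (u powr (\<gamma>-1)) * indicator {u. 0<u \<and> u powr (-\<gamma>/p) * norm (\<phi> (s*u)) > 1} u \<partial>lborel)"
proof -
  have s: "0 < s" unfolding s_def using lam by simp
  have s1: "s powr (-\<gamma>/p) = lam" unfolding s_def using lam p gam by (simp add: powr_powr)
  have s2: "lam powr p * s * s powr (\<gamma>-1) = 1"
  proof -
    have "s * s powr (\<gamma>-1) = s powr \<gamma>" using s by (simp add: powr_diff)
    also have "\<dots> = lam powr (-p)" unfolding s_def using lam gam by (simp add: powr_powr)
    finally show ?thesis using lam by (simp add: powr_minus field_simps)
  qed
  let ?h = "\<lambda>t. ennreal (t powr (\<gamma>-1)) * indicator {t. 0<t \<and> t powr (-\<gamma>/p) * norm (\<phi> t) > lam} t"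
  have hm: "?h \<in> borel_measurable borel" by measurable
  have "(\<integral>\<^sup>+t. ?h t \<partial>lborel) = ennreal \<bar>s\<bar> * (\<integral>\<^sup>+u. ?h (0 + s*u) \<partial>lborel)"
    using s by (intro nn_integral_real_affine[OF hm]) auto
  then have "ennreal (lam powr p) * (\<integral>\<^sup>+t. ?h t \<partial>lborel) = (\<integral>\<^sup>+u. ennreal (lam powr p * s) * ?h (s*u) \<partial>lborel)"
    using s lam by (simp add: nn_integral_cmult ennreal_mult mult.assoc)
  also have "\<dots> = (\<integral>\<^sup>+u. ennreal (u powr (\<gamma>-1)) * indicator {u. 0<u \<and> u powr (-\<gamma>/p) * norm (\<phi> (s*u)) > 1} u \<partial>lborel)"
  proof (rule nn_integral_cong)
    fix u :: real
    show "ennreal (lam powr p * s) * ?h (s*u) = ennreal (u powr (\<gamma>-1)) * indicator {u. 0<u \<and> u powr (-\<gamma>/p) * norm (\<phi> (s*u)) > 1} u"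
    proof (cases "0 < u")
      case True
      have e1: "(s*u) powr (-\<gamma>/p) = lam * u powr (-\<gamma>/p)" using s True s1 by (simp add: powr_mult)
      have e2: "lam powr p * s * (s*u) powr (\<gamma>-1) = u powr (\<gamma>-1)" using s True s2 by (simp add: powr_mult)
      have e3: "lam * u powr (-\<gamma>/p) * norm (\<phi> (s*u)) > lam \<longleftrightarrow> u powr (-\<gamma>/p) * norm (\<phi> (s*u)) > 1"
        using lam by simp
      show ?thesis using True s lam e1 e2 e3
        by (simp add: indicator_def ennreal_mult[symmetric] mult.assoc)
    next
      case False
      then have "\<not> 0 < s*u" using s by (simp add: mult_pos_pos zero_less_mult_iff)
      then show ?thesis using False by (simp add: indicator_def)
    qed
  qed
  finally show ?thesis by simp
qed



lemma filterlim_F_pos: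
  assumes "F = at_top \<or> F = at_right (0::real)" "filterlim X F sequentially"
  shows "eventually (\<lambda>n. 0 < X n) sequentially"
proof -
  have "eventually (\<lambda>x. 0 < x) F" using assms(1)
    by (auto simp: eventually_gt_at_top eventually_at_right_less)
  then show ?thesis using assms(2) by (auto simp: filterlim_iff)
qed

context
  fixes \<phi> :: "real \<Rightarrow> complex" and p \<gamma> :: real and g :: complex and X :: "nat \<Rightarrow> real"
  assumes \<phi>m[measurable]: "\<phi> \<in> borel_measurable borel" and p: "0<p" and gam: "\<gamma>\<noteq>0"
    and lim: "(\<phi> \<longlongrightarrow> g) (at_right 0)"
    and X: "filterlim X (if \<gamma>>0 then at_top else at_right 0) sequentially" and Xpos: "\<And>n. 0 < X n"
begin

lemma s_lim: "filterlim (\<lambda>n. X n powr (-p/\<gamma>)) (at_right 0) sequentially"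
proof (rule tendsto_imp_filterlim_at_right)
  show "\<forall>\<^sub>F n in sequentially. 0 < X n powr (- p / \<gamma>)"
  proof (rule always_eventually, rule allI)
    fix n have "X n \<noteq> 0" using Xpos[of n] by simp
    then show "0 < X n powr (- p / \<gamma>)" by simp
  qed
  show "((\<lambda>n. X n powr (-p/\<gamma>)) \<longlongrightarrow> 0) sequentially"
  proof (cases "\<gamma> > 0")
    case True
    then show ?thesis using X p by (intro tendsto_neg_powr) (auto simp: divide_pos_pos)
  next
    case False
    then have gn: "\<gamma> < 0" using gam by simp
    then have "filterlim X (at_right 0) sequentially" using X by simp
    then have "(X \<longlongrightarrow> 0) sequentially" by (simp add: filterlim_at)
    then show ?thesis using gn p Xpos
      by (intro tendsto_zero_powrI[where b="-p/\<gamma>"]) (auto simp: less_imp_le divide_pos_neg)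
  qed
qed

definition U :: "nat \<Rightarrow> real \<Rightarrow> ennreal" where
  "U n u = ennreal (u powr (\<gamma>-1)) * indicator {u. 0<u \<and> u powr (-\<gamma>/p) * norm (\<phi> (X n powr (-p/\<gamma>) * u)) > 1} u"

definition U' :: "real \<Rightarrow> ennreal" where
  "U' u = ennreal (u powr (\<gamma>-1)) * indicator {u. 0<u \<and> u powr (-\<gamma>/p) * norm g > 1} u"

lemma U_meas[measurable]: "U n \<in> borel_measurable borel"
  unfolding U_def by measurable

lemma U'_meas[measurable]: "U' \<in> borel_measurable borel"
  unfolding U'_def by measurable

lemma U_eq: "ennreal (X n powr p) * (\<integral>\<^sup>+t\<in>{t. 0<t \<and> t powr (-\<gamma>/p) * norm (\<phi> t) > X n}. ennreal (t powr (\<gamma>-1)) \<partial>lborel)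
   = (\<integral>\<^sup>+u. U n u \<partial>lborel)"
  unfolding U_def by (rule rescale[OF \<phi>m p gam Xpos])

lemma U'_int: "(\<integral>\<^sup>+u. U' u \<partial>lborel) = ennreal (norm g powr p / \<bar>\<gamma>\<bar>)"
proof -
  have "(\<integral>\<^sup>+u. U' u \<partial>lborel) = ennreal (1 powr p) * (\<integral>\<^sup>+t\<in>{t. 0<t \<and> t powr (-\<gamma>/p) * norm g > 1}. ennreal (t powr (\<gamma>-1)) \<partial>lborel)"
    unfolding U'_def by simp
  also have "\<dots> = ennreal (norm g powr p / \<bar>\<gamma>\<bar>)"
    by (rule ideal_integral) (use p gam in auto)
  finally show ?thesis .
qed

lemma U_conv: "AE u in lborel. (\<lambda>n. U n u) \<longlonglongrightarrow> U' u"
  using AE_lborel_singleton[of "norm g powr (p/\<gamma>)"]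
proof eventually_elim
  fix u :: real assume u: "u \<noteq> norm g powr (p/\<gamma>)"
  show "(\<lambda>n. U n u) \<longlonglongrightarrow> U' u"
  proof (cases "0 < u")
    case False
    then show ?thesis by (simp add: U_def U'_def)
  next
    case True
    have sl: "filterlim (\<lambda>n. X n powr (-p/\<gamma>) * u) (at_right 0) sequentially"
    proof (rule tendsto_imp_filterlim_at_right)
      show "\<forall>\<^sub>F n in sequentially. 0 < X n powr (- p / \<gamma>) * u"
      proof (rule always_eventually, rule allI)
        fix n have "X n \<noteq> 0" using Xpos[of n] by simp
        then show "0 < X n powr (- p / \<gamma>) * u" using True by simp
      qed
      have "((\<lambda>n. X n powr (-p/\<gamma>)) \<longlongrightarrow> 0) sequentially" using s_lim by (simp add: filterlim_at)
      then show "((\<lambda>n. X n powr (-p/\<gamma>) * u) \<longlongrightarrow> 0) sequentially"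
        by (rule tendsto_mult_left_zero)
    qed
    have "(\<lambda>n. \<phi> (X n powr (-p/\<gamma>) * u)) \<longlonglongrightarrow> g"
      using filterlim_compose[OF lim sl] .
    then have vl: "(\<lambda>n. u powr (-\<gamma>/p) * norm (\<phi> (X n powr (-p/\<gamma>) * u))) \<longlonglongrightarrow> u powr (-\<gamma>/p) * norm g"
      by (intro tendsto_intros)
    have ne: "u powr (-\<gamma>/p) * norm g \<noteq> 1"
    proof
      assume h: "u powr (-\<gamma>/p) * norm g = 1"
      have "norm g \<noteq> 0" using h by auto
      then have gp: "norm g > 0" by simp
      have "u = (u powr (-\<gamma>/p)) powr (-p/\<gamma>)" using True p gam by (simp add: powr_powr)
      also have "u powr (-\<gamma>/p) = inverse (norm g)" using h gp by (simp add: field_simps)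
      also have "inverse (norm g) powr (-p/\<gamma>) = norm g powr (p/\<gamma>)"
        using gp by (simp add: powr_def ln_inverse)
      finally show False using u by simp
    qed
    show ?thesis
    proof (cases "u powr (-\<gamma>/p) * norm g > 1")
      case True
      then have "eventually (\<lambda>n. u powr (-\<gamma>/p) * norm (\<phi> (X n powr (-p/\<gamma>) * u)) > 1) sequentially"
        using order_tendstoD(1)[OF vl] by blast
      then have "eventually (\<lambda>n. U n u = U' u) sequentially"
        by eventually_elim (use True \<open>0<u\<close> in \<open>simp add: U_def U'_def\<close>)
      then show ?thesis by (rule tendsto_eventually)
    next
      case False
      then have "u powr (-\<gamma>/p) * norm g < 1" using ne by simp
      then have "eventually (\<lambda>n. u powr (-\<gamma>/p) * norm (\<phi> (X n powr (-p/\<gamma>) * u)) < 1) sequentially"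
        using order_tendstoD(2)[OF vl] by blast
      then have "eventually (\<lambda>n. U n u = U' u) sequentially"
        by eventually_elim (use False \<open>u powr (-\<gamma>/p) * norm g < 1\<close> in \<open>simp add: U_def U'_def\<close>)
      then show ?thesis by (rule tendsto_eventually)
    qed
  qed
qed


lemma perx_liminf: "ennreal (norm g powr p / \<bar>\<gamma>\<bar>) \<le> liminf (\<lambda>n. \<integral>\<^sup>+u. U n u \<partial>lborel)"
proof -
  have "AE u in lborel. U' u = liminf (\<lambda>n. U n u)"
    using U_conv by eventually_elim (simp add: lim_imp_Liminf)
  then have "(\<integral>\<^sup>+u. U' u \<partial>lborel) = (\<integral>\<^sup>+u. liminf (\<lambda>n. U n u) \<partial>lborel)"
    by (rule nn_integral_cong_AE)
  also have "\<dots> \<le> liminf (\<lambda>n. \<integral>\<^sup>+u. U n u \<partial>lborel)"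
    by (rule nn_integral_liminf) simp
  finally show ?thesis by (simp add: U'_int)
qed

lemma perx_lim:
  assumes C: "\<And>t. 0<t \<Longrightarrow> norm (\<phi> t) \<le> C"
  shows "(\<lambda>n. \<integral>\<^sup>+u. U n u \<partial>lborel) \<longlonglongrightarrow> ennreal (norm g powr p / \<bar>\<gamma>\<bar>)"
proof -
  have C0: "0 \<le> C" using C[of 1] norm_ge_zero[of "\<phi> 1"] by linarith
  define w where "w u = ennreal (u powr (\<gamma>-1)) * indicator {u. 0<u \<and> u powr (-\<gamma>/p) * C > 1} u" for u
  have wm[measurable]: "w \<in> borel_measurable borel" unfolding w_def by measurable
  have "(\<integral>\<^sup>+u. w u \<partial>lborel) = ennreal (1 powr p) * (\<integral>\<^sup>+t\<in>{t. 0<t \<and> t powr (-\<gamma>/p) * C > 1}. ennreal (t powr (\<gamma>-1)) \<partial>lborel)"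
    unfolding w_def by simp
  also have "\<dots> = ennreal (C powr p / \<bar>\<gamma>\<bar>)"
    by (rule ideal_integral) (use p gam C0 in auto)
  finally have wf: "(\<integral>\<^sup>+u. w u \<partial>lborel) < \<infinity>" by simp
  have bd: "U n u \<le> w u" for n u
  proof (cases "0 < u")
    case True
    have "X n \<noteq> 0" using Xpos[of n] by simp
    then have "0 < X n powr (-p/\<gamma>) * u" using True by simp
    then have "norm (\<phi> (X n powr (-p/\<gamma>) * u)) \<le> C" by (rule C)
    then have "u powr (-\<gamma>/p) * norm (\<phi> (X n powr (-p/\<gamma>) * u)) \<le> u powr (-\<gamma>/p) * C"
      by (intro mult_left_mono) auto
    then show ?thesis unfolding U_def w_def by (auto simp: indicator_def)
  next
    case False
    then show ?thesis unfolding U_def w_def by simp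
  qed
  have "(\<lambda>n. \<integral>\<^sup>+u. U n u \<partial>lborel) \<longlonglongrightarrow> (\<integral>\<^sup>+u. U' u \<partial>lborel)"
    by (rule nn_integral_dominated_convergence[where w=w]) (use bd wf U_conv in auto)
  then show ?thesis by (simp add: U'_int)
qed

end



definition Kx :: "(real \<Rightarrow> complex) \<Rightarrow> real \<Rightarrow> real \<Rightarrow> real \<Rightarrow> ennreal" where
  "Kx \<phi> p \<gamma> lam = ennreal (lam powr p) * (\<integral>\<^sup>+t\<in>{t. 0<t \<and> t powr (-\<gamma>/p) * norm (\<phi> t) > lam}. ennreal (t powr (\<gamma>-1)) \<partial>lborel)"

lemma Kx_lim:
  assumes "\<phi> \<in> borel_measurable borel" "0<p" "\<gamma>\<noteq>0" "(\<phi> \<longlongrightarrow> g) (at_right 0)"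
    "filterlim X (if \<gamma>>0 then at_top else at_right 0) sequentially" "\<And>n. 0 < X n"
    "\<And>t. 0<t \<Longrightarrow> norm (\<phi> t) \<le> C"
  shows "(\<lambda>n. Kx \<phi> p \<gamma> (X n)) \<longlonglongrightarrow> ennreal (norm g powr p / \<bar>\<gamma>\<bar>)"
  unfolding Kx_def U_eq[OF assms(1-6)] by (rule perx_lim[OF assms])

lemma Kx_liminf:
  assumes "\<phi> \<in> borel_measurable borel" "0<p" "\<gamma>\<noteq>0" "(\<phi> \<longlongrightarrow> g) (at_right 0)"
    "filterlim X (if \<gamma>>0 then at_top else at_right 0) sequentially" "\<And>n. 0 < X n"
  shows "ennreal (norm g powr p / \<bar>\<gamma>\<bar>) \<le> liminf (\<lambda>n. Kx \<phi> p \<gamma> (X n))"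
  unfolding Kx_def U_eq[OF assms(1-6)] by (rule perx_liminf[OF assms])

lemma Kx_bound:
  assumes "0 < lam" "0<p" "\<gamma>\<noteq>0" "\<And>t. 0<t \<Longrightarrow> norm (\<phi> t) \<le> C"
  shows "Kx \<phi> p \<gamma> lam \<le> ennreal (C powr p / \<bar>\<gamma>\<bar>)"
proof -
  have C0: "0 \<le> C" using assms(4)[of 1] norm_ge_zero[of "\<phi> 1"] by linarith
  have "Kx \<phi> p \<gamma> lam \<le> ennreal (lam powr p) * (\<integral>\<^sup>+t\<in>{t. 0<t \<and> t powr (-\<gamma>/p) * C > lam}. ennreal (t powr (\<gamma>-1)) \<partial>lborel)"
    unfolding Kx_def
  proof (rule mult_left_mono[OF nn_integral_mono])
    fix t :: real
    show "ennreal (t powr (\<gamma> - 1)) * indicator {t. 0 < t \<and> lam < t powr (- \<gamma> / p) * norm (\<phi> t)} t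
      \<le> ennreal (t powr (\<gamma> - 1)) * indicator {t. 0 < t \<and> lam < t powr (- \<gamma> / p) * C} t"
    proof (cases "0 < t \<and> lam < t powr (- \<gamma> / p) * norm (\<phi> t)")
      case True
      then have "t powr (- \<gamma> / p) * norm (\<phi> t) \<le> t powr (- \<gamma> / p) * C"
        using assms(4) by (intro mult_left_mono) auto
      then have "lam < t powr (- \<gamma> / p) * C" using True by linarith
      then show ?thesis using True by (auto simp: indicator_def)
    next
      case False
      then show ?thesis by (simp add: indicator_def)
    qed
  qed simp
  also have "\<dots> = ennreal (C powr p / \<bar>\<gamma>\<bar>)"
    by (rule ideal_integral) (use assms C0 in auto)
  finally show ?thesis .
qed



lemma Kx_meas:
  assumes [measurable]: "(\<lambda>(x,t). \<Psi> x t) \<in> borel_measurable (M \<Otimes>\<^sub>M lborel)"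
  shows "(\<lambda>x. Kx (\<Psi> x) p \<gamma> lam) \<in> borel_measurable M"
proof -
  have m: "(\<lambda>z. \<Psi> (fst z) (snd z)) \<in> borel_measurable (M \<Otimes>\<^sub>M lborel)"
    using assms by (simp add: case_prod_beta')
  have "(\<lambda>(x,t). ennreal (t powr (\<gamma>-1)) * indicator {t. 0<t \<and> t powr (-\<gamma>/p) * norm (\<Psi> x t) > lam} t) \<in> borel_measurable (M \<Otimes>\<^sub>M lborel)"
    using m by measurable
  then have "(\<lambda>x. \<integral>\<^sup>+t. ennreal (t powr (\<gamma>-1)) * indicator {t. 0<t \<and> t powr (-\<gamma>/p) * norm (\<Psi> x t) > lam} t \<partial>lborel) \<in> borel_measurable M"
    by (rule lborel.borel_measurable_nn_integral)
  then show ?thesis unfolding Kx_def by measurable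
qed



theorem mainTheorem17:
  fixes M :: "'a measure" and p \<gamma> :: real
    and T :: "real \<Rightarrow> ('a \<Rightarrow> complex) \<Rightarrow> ('a \<Rightarrow> complex)"
    and f :: "'a \<Rightarrow> complex"
  assumes sf: "sigma_finite_measure M"
    and p: "1 \<le> p"
    and gam: "\<gamma> \<noteq> 0"
    and ops: "\<forall>t>0. \<forall>h\<in>Lp M p. T t h \<in> Lp M p"
    and f: "f \<in> Lp M p"
    and meas: "(\<lambda>(x, t). T t f x) \<in> borel_measurable (M \<Otimes>\<^sub>M restrict_space lborel {0<..})"
  defines "F \<equiv> (if \<gamma> > 0 then at_top else at_right (0::real))"
  shows "((maxfun (\<lambda>t. T t f) \<in> borel_measurable M
            \<and> (AE x in M. maxfun (\<lambda>t. T t f) x < \<infinity>)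
            \<and> integrable M (\<lambda>x. enn2real (maxfun (\<lambda>t. T t f) x) powr p))
          \<longrightarrow> (SUP lam\<in>{0<..}. Jfun M p \<gamma> (\<lambda>t. T t f) lam)
                \<le> ennreal (1 / \<bar>\<gamma>\<bar> * (\<integral>x. enn2real (maxfun (\<lambda>t. T t f) x) powr p \<partial>M))
            \<and> (\<forall>g. (AE x in M. ((\<lambda>t. T t f x) \<longlongrightarrow> g x) (at_right 0))
                 \<longrightarrow> (Jfun M p \<gamma> (\<lambda>t. T t f) \<longlongrightarrow>
                       ennreal (1 / \<bar>\<gamma>\<bar>) * (\<integral>\<^sup>+ x. ennreal (norm (g x) powr p) \<partial>M)) F))
       \<and> (\<forall>g. (AE x in M. ((\<lambda>t. T t f x) \<longlongrightarrow> g x) (at_right 0))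
            \<longrightarrow> ennreal (1 / \<bar>\<gamma>\<bar>) * (\<integral>\<^sup>+ x. ennreal (norm (g x) powr p) \<partial>M)
                  \<le> Liminf F (Jfun M p \<gamma> (\<lambda>t. T t f)))"
  proof -
  have p0: "0 < p" using p by simp
  have Fd: "F = at_top \<or> F = at_right 0" unfolding F_def by simp
  have FF: "F = (if \<gamma>>0 then at_top else at_right 0)" unfolding F_def ..
  define \<Psi> where "\<Psi> x t = T (if 0 < t then t else 1) f x" for x t
  have \<Psi>m: "(\<lambda>(x,t). \<Psi> x t) \<in> borel_measurable (M \<Otimes>\<^sub>M lborel)"
  proof -
    have r1: "(\<lambda>z::'a\<times>real. if 0 < snd z then snd z else 1) \<in> measurable (M \<Otimes>\<^sub>M lborel) (restrict_space lborel {0<..})"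
      by (rule measurable_restrict_space2) auto
    have r: "(\<lambda>z::'a\<times>real. (fst z, if 0 < snd z then snd z else 1)) \<in> measurable (M \<Otimes>\<^sub>M lborel) (M \<Otimes>\<^sub>M restrict_space lborel {0<..})"
      using r1 by (intro measurable_Pair) auto
    have "(\<lambda>(x,t). \<Psi> x t) = (\<lambda>(x, t). T t f x) \<circ> (\<lambda>z::'a\<times>real. (fst z, if 0 < snd z then snd z else 1))"
      by (auto simp: \<Psi>_def fun_eq_iff)
    then show ?thesis using measurable_comp[OF r meas] by simp
  qed
  have \<Psi>x: "\<Psi> x \<in> borel_measurable borel" if "x \<in> space M" for x
  proof -
    have "(\<lambda>t. (\<lambda>(x,t). \<Psi> x t) (x, t)) \<in> borel_measurable lborel"
      by (rule measurable_Pair2[OF \<Psi>m that])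
    then show ?thesis by simp
  qed
  have \<Psi>1: "(\<lambda>x. \<Psi> x t) \<in> borel_measurable M" for t :: real
  proof -
    have "(\<lambda>x. (\<lambda>(x,t). \<Psi> x t) (x, t)) \<in> borel_measurable M"
      by (rule measurable_comp[OF measurable_Pair2'[of t lborel M] \<Psi>m, unfolded comp_def]) simp
    then show ?thesis by simp
  qed
  have \<Psi>T: "\<Psi> x t = T t f x" if "0 < t" for x t using that by (simp add: \<Psi>_def)
  have Jeq: "Jfun M p \<gamma> (\<lambda>t. T t f) lam = (\<integral>\<^sup>+x. Kx (\<Psi> x) p \<gamma> lam \<partial>M)" for lam
  proof -
    have "Jfun M p \<gamma> (\<lambda>t. T t f) lam = ennreal (lam powr p) *
       (\<integral>\<^sup>+ x. (\<integral>\<^sup>+ t \<in> {t. 0 < t \<and> t powr (- \<gamma> / p) * norm (\<Psi> x t) > lam}.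
          ennreal (t powr (\<gamma> - 1)) \<partial>lborel) \<partial>M)"
      unfolding Jfun_def
      by (intro arg_cong2[where f="(*)"] refl nn_integral_cong arg_cong2[where f=nn_integral] ext)
         (auto simp: \<Psi>T indicator_def)
    also have "\<dots> = (\<integral>\<^sup>+x. Kx (\<Psi> x) p \<gamma> lam \<partial>M)"
    proof -
      have m: "(\<lambda>z. \<Psi> (fst z) (snd z)) \<in> borel_measurable (M \<Otimes>\<^sub>M lborel)"
        using \<Psi>m by (simp add: case_prod_beta')
      have "(\<lambda>(x,t). ennreal (t powr (\<gamma>-1)) * indicator {t. 0<t \<and> t powr (-\<gamma>/p) * norm (\<Psi> x t) > lam} t) \<in> borel_measurable (M \<Otimes>\<^sub>M lborel)"
        using m by measurable
      then have "(\<lambda>x. \<integral>\<^sup>+t. ennreal (t powr (\<gamma>-1)) * indicator {t. 0<t \<and> t powr (-\<gamma>/p) * norm (\<Psi> x t) > lam} t \<partial>lborel) \<in> borel_measurable M"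
        by (rule lborel.borel_measurable_nn_integral)
      then show ?thesis unfolding Kx_def by (rule nn_integral_cmult[symmetric])
    qed
    finally show ?thesis .
  qed
  have Km: "(\<lambda>x. Kx (\<Psi> x) p \<gamma> lam) \<in> borel_measurable M" for lam
    by (rule Kx_meas[OF \<Psi>m])
  define G where "G x = liminf (\<lambda>n. ennreal (norm (\<Psi> x (1 / real (Suc n))) powr p))" for x
  have Gm: "G \<in> borel_measurable M"
    unfolding G_def using \<Psi>1 by measurable
  have gfacts: "(AE x in M. (\<Psi> x \<longlongrightarrow> g x) (at_right 0) \<and> ennreal (1/\<bar>\<gamma>\<bar>) * G x = ennreal (norm (g x) powr p / \<bar>\<gamma>\<bar>))
     \<and> ennreal (1 / \<bar>\<gamma>\<bar>) * (\<integral>\<^sup>+ x. ennreal (norm (g x) powr p) \<partial>M) = (\<integral>\<^sup>+x. ennreal (1/\<bar>\<gamma>\<bar>) * G x \<partial>M)"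
    if conv: "AE x in M. ((\<lambda>t. T t f x) \<longlongrightarrow> g x) (at_right 0)" for g
  proof -
    have n1: "filterlim (\<lambda>n. 1 / real (Suc n)) (at_right 0) sequentially"
      by (intro tendsto_imp_filterlim_at_right LIMSEQ_Suc[OF lim_1_over_n]) auto
    have A: "AE x in M. (\<Psi> x \<longlongrightarrow> g x) (at_right 0) \<and> G x = ennreal (norm (g x) powr p)"
      using conv
    proof eventually_elim
      fix x assume c: "((\<lambda>t. T t f x) \<longlongrightarrow> g x) (at_right 0)"
      have "eventually (\<lambda>t. T t f x = \<Psi> x t) (at_right (0::real))"
        using eventually_at_right_less[of 0] by eventually_elim (simp add: \<Psi>T)
      then have c': "(\<Psi> x \<longlongrightarrow> g x) (at_right 0)" using c by (rule Lim_transform_eventually[rotated])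
      have "(\<lambda>n. \<Psi> x (1 / real (Suc n))) \<longlonglongrightarrow> g x" by (rule filterlim_compose[OF c' n1])
      then have "(\<lambda>n. norm (\<Psi> x (1 / real (Suc n))) powr p) \<longlonglongrightarrow> norm (g x) powr p"
        using p0 by (intro tendsto_powr' tendsto_norm tendsto_const) auto
      then have "(\<lambda>n. ennreal (norm (\<Psi> x (1 / real (Suc n))) powr p)) \<longlonglongrightarrow> ennreal (norm (g x) powr p)"
        by (rule tendsto_ennrealI)
      then have "G x = ennreal (norm (g x) powr p)" unfolding G_def by (simp add: lim_imp_Liminf)
      with c' show "(\<Psi> x \<longlongrightarrow> g x) (at_right 0) \<and> G x = ennreal (norm (g x) powr p)" by simp
    qed
    have 1: "AE x in M. (\<Psi> x \<longlongrightarrow> g x) (at_right 0) \<and> ennreal (1/\<bar>\<gamma>\<bar>) * G x = ennreal (norm (g x) powr p / \<bar>\<gamma>\<bar>)"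
      using A by eventually_elim (auto simp: ennreal_mult[symmetric] divide_inverse mult.commute)
    have "(\<integral>\<^sup>+ x. ennreal (norm (g x) powr p) \<partial>M) = (\<integral>\<^sup>+ x. G x \<partial>M)"
      using A by (intro nn_integral_cong_AE) auto
    then have 2: "ennreal (1 / \<bar>\<gamma>\<bar>) * (\<integral>\<^sup>+ x. ennreal (norm (g x) powr p) \<partial>M) = (\<integral>\<^sup>+x. ennreal (1/\<bar>\<gamma>\<bar>) * G x \<partial>M)"
      using Gm by (simp add: nn_integral_cmult)
    show ?thesis using 1 2 by simp
  qed
  have part2: "ennreal (1 / \<bar>\<gamma>\<bar>) * (\<integral>\<^sup>+ x. ennreal (norm (g x) powr p) \<partial>M) \<le> Liminf F (Jfun M p \<gamma> (\<lambda>t. T t f))"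
    if conv: "AE x in M. ((\<lambda>t. T t f x) \<longlongrightarrow> g x) (at_right 0)" for g
  proof (rule seq_Liminf_F[OF Fd])
    fix X :: "nat \<Rightarrow> real" assume X: "filterlim X F sequentially" "\<And>n. 0 < X n"
    have X': "filterlim X (if \<gamma>>0 then at_top else at_right 0) sequentially" using X(1) FF by simp
    note gf = gfacts[OF conv]
    have "ennreal (1 / \<bar>\<gamma>\<bar>) * (\<integral>\<^sup>+ x. ennreal (norm (g x) powr p) \<partial>M) = (\<integral>\<^sup>+x. ennreal (1/\<bar>\<gamma>\<bar>) * G x \<partial>M)"
      using gf by simp
    also have "\<dots> \<le> (\<integral>\<^sup>+x. liminf (\<lambda>n. Kx (\<Psi> x) p \<gamma> (X n)) \<partial>M)"
    proof (rule nn_integral_mono_AE)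
      show "AE x in M. ennreal (1/\<bar>\<gamma>\<bar>) * G x \<le> liminf (\<lambda>n. Kx (\<Psi> x) p \<gamma> (X n))"
        using conjunct1[OF gf] AE_space
      proof eventually_elim
        fix x assume x: "(\<Psi> x \<longlongrightarrow> g x) (at_right 0) \<and> ennreal (1/\<bar>\<gamma>\<bar>) * G x = ennreal (norm (g x) powr p / \<bar>\<gamma>\<bar>)"
          "x \<in> space M"
        show "ennreal (1/\<bar>\<gamma>\<bar>) * G x \<le> liminf (\<lambda>n. Kx (\<Psi> x) p \<gamma> (X n))"
          using Kx_liminf[OF \<Psi>x[OF x(2)] p0 gam _ X' X(2)] x(1) by simp
      qed
    qed
    also have "\<dots> \<le> liminf (\<lambda>n. \<integral>\<^sup>+x. Kx (\<Psi> x) p \<gamma> (X n) \<partial>M)"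
      by (rule nn_integral_liminf) (rule Km)
    also have "\<dots> = liminf (\<lambda>n. Jfun M p \<gamma> (\<lambda>t. T t f) (X n))"
      by (simp add: Jeq)
    finally show "ennreal (1 / \<bar>\<gamma>\<bar>) * (\<integral>\<^sup>+ x. ennreal (norm (g x) powr p) \<partial>M) \<le> liminf (\<lambda>n. Jfun M p \<gamma> (\<lambda>t. T t f) (X n))" .
  qed
  have part1: "(SUP lam\<in>{0<..}. Jfun M p \<gamma> (\<lambda>t. T t f) lam)
                \<le> ennreal (1 / \<bar>\<gamma>\<bar> * (\<integral>x. enn2real (maxfun (\<lambda>t. T t f) x) powr p \<partial>M))
            \<and> (\<forall>g. (AE x in M. ((\<lambda>t. T t f x) \<longlongrightarrow> g x) (at_right 0))
                 \<longrightarrow> (Jfun M p \<gamma> (\<lambda>t. T t f) \<longlongrightarrow>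
                       ennreal (1 / \<bar>\<gamma>\<bar>) * (\<integral>\<^sup>+ x. ennreal (norm (g x) powr p) \<partial>M)) F)"
    if Sm: "maxfun (\<lambda>t. T t f) \<in> borel_measurable M"
      and Sf: "AE x in M. maxfun (\<lambda>t. T t f) x < \<infinity>"
      and Si: "integrable M (\<lambda>x. enn2real (maxfun (\<lambda>t. T t f) x) powr p)"
  proof -
    define C where "C x = enn2real (maxfun (\<lambda>t. T t f) x)" for x
    have Cb: "norm (\<Psi> x t) \<le> C x" if "maxfun (\<lambda>t. T t f) x < \<infinity>" "0 < t" for x t
    proof -
      have "ennreal (norm (T t f x)) \<le> maxfun (\<lambda>t. T t f) x"
        unfolding maxfun_def using \<open>0<t\<close> by (intro SUP_upper) auto
      then have "enn2real (ennreal (norm (T t f x))) \<le> C x"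
        unfolding C_def using that(1) by (intro enn2real_mono) (auto simp: top_unique)
      then show ?thesis using \<open>0<t\<close> by (simp add: \<Psi>T)
    qed
    define w where "w x = ennreal (C x powr p / \<bar>\<gamma>\<bar>)" for x
    have wm: "w \<in> borel_measurable M" unfolding w_def C_def using Sm by measurable
    have wint: "(\<integral>\<^sup>+x. w x \<partial>M) = ennreal (1 / \<bar>\<gamma>\<bar> * (\<integral>x. enn2real (maxfun (\<lambda>t. T t f) x) powr p \<partial>M))"
    proof -
      have "(\<integral>\<^sup>+x. w x \<partial>M) = ennreal (\<integral>x. C x powr p / \<bar>\<gamma>\<bar> \<partial>M)"
        unfolding w_def using Si unfolding C_def[symmetric]
        by (intro nn_integral_eq_integral) auto
      also have "(\<integral>x. C x powr p / \<bar>\<gamma>\<bar> \<partial>M) = 1 / \<bar>\<gamma>\<bar> * (\<integral>x. enn2real (maxfun (\<lambda>t. T t f) x) powr p \<partial>M)"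
        unfolding C_def by simp
      finally show ?thesis .
    qed
    have bnd: "AE x in M. Kx (\<Psi> x) p \<gamma> lam \<le> w x" if "0 < lam" for lam
      using Sf by eventually_elim (unfold w_def, rule Kx_bound[OF that p0 gam Cb], auto)
    have A: "(SUP lam\<in>{0<..}. Jfun M p \<gamma> (\<lambda>t. T t f) lam)
                \<le> ennreal (1 / \<bar>\<gamma>\<bar> * (\<integral>x. enn2real (maxfun (\<lambda>t. T t f) x) powr p \<partial>M))"
    proof (rule SUP_least)
      fix lam :: real assume "lam \<in> {0<..}"
      then have "(\<integral>\<^sup>+x. Kx (\<Psi> x) p \<gamma> lam \<partial>M) \<le> (\<integral>\<^sup>+x. w x \<partial>M)"
        using bnd by (intro nn_integral_mono_AE) auto
      then show "Jfun M p \<gamma> (\<lambda>t. T t f) lam \<le> ennreal (1 / \<bar>\<gamma>\<bar> * (\<integral>x. enn2real (maxfun (\<lambda>t. T t f) x) powr p \<partial>M))"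
        by (simp add: Jeq wint)
    qed
    have B: "(Jfun M p \<gamma> (\<lambda>t. T t f) \<longlongrightarrow> ennreal (1 / \<bar>\<gamma>\<bar>) * (\<integral>\<^sup>+ x. ennreal (norm (g x) powr p) \<partial>M)) F"
      if conv: "AE x in M. ((\<lambda>t. T t f x) \<longlongrightarrow> g x) (at_right 0)" for g
    proof (rule seq_tendsto_F[OF Fd])
      fix X :: "nat \<Rightarrow> real" assume X: "filterlim X F sequentially" "\<And>n. 0 < X n"
      have X': "filterlim X (if \<gamma>>0 then at_top else at_right 0) sequentially" using X(1) FF by simp
      note gf = gfacts[OF conv]
      have "(\<lambda>n. \<integral>\<^sup>+x. Kx (\<Psi> x) p \<gamma> (X n) \<partial>M) \<longlonglongrightarrow> (\<integral>\<^sup>+x. ennreal (1/\<bar>\<gamma>\<bar>) * G x \<partial>M)"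
      proof (rule nn_integral_dominated_convergence[where w=w])
        show "\<And>i. (\<lambda>x. Kx (\<Psi> x) p \<gamma> (X i)) \<in> borel_measurable M" by (rule Km)
        show "(\<lambda>x. ennreal (1/\<bar>\<gamma>\<bar>) * G x) \<in> borel_measurable M" using Gm by measurable
        show "w \<in> borel_measurable M" by (rule wm)
        show "\<And>j. AE x in M. Kx (\<Psi> x) p \<gamma> (X j) \<le> w x" using bnd X(2) by blast
        show "integral\<^sup>N M w < \<infinity>" by (simp add: wint)
        show "AE x in M. (\<lambda>i. Kx (\<Psi> x) p \<gamma> (X i)) \<longlonglongrightarrow> ennreal (1/\<bar>\<gamma>\<bar>) * G x"
          using conjunct1[OF gf] Sf AE_space
        proof eventually_elim
          fix x assume x: "(\<Psi> x \<longlongrightarrow> g x) (at_right 0) \<and> ennreal (1/\<bar>\<gamma>\<bar>) * G x = ennreal (norm (g x) powr p / \<bar>\<gamma>\<bar>)"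
            "maxfun (\<lambda>t. T t f) x < \<infinity>" "x \<in> space M"
          show "(\<lambda>i. Kx (\<Psi> x) p \<gamma> (X i)) \<longlonglongrightarrow> ennreal (1/\<bar>\<gamma>\<bar>) * G x"
            using Kx_lim[OF \<Psi>x[OF x(3)] p0 gam _ X' X(2) Cb[OF x(2)]] x(1) by simp
        qed
      qed
      then show "(\<lambda>n. Jfun M p \<gamma> (\<lambda>t. T t f) (X n)) \<longlonglongrightarrow> ennreal (1 / \<bar>\<gamma>\<bar>) * (\<integral>\<^sup>+ x. ennreal (norm (g x) powr p) \<partial>M)"
        using gf by (simp add: Jeq)
    qed
    show ?thesis using A B by blast
  qed
  show ?thesis using part1 part2 by blast
qed


end
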